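(* Let $H$ be a weak Hopf algebra and $\pi\colon H\to A$ a partial representation of $H$ in an algebra $A$. The following are equivalent: (1) $\pi(h_1)\pi(S(h_2))=\pi(h_1S(h_2))=\pi(\varepsilon_t(h))$ for all $h\in H$; (2) $\pi(S(h_1))\pi(h_2)=\pi(S(h_1)h_2)=\pi(\varepsilon_s(h))$ for all $h\in H$; (3) $\pi$ is a representation, i.e. an algebra morphism.
   Context: All algebras are associative and unital over a field $\Bbbk$; Sweedler notation $\Delta(h)=h_1\otimes h_2$, $\Delta(1_H)=1_1\otimes1_2$. A weak Hopf algebra is $(H,m,u,\Delta,\varepsilon,S)$ with $H$ an algebra, $(H,\Delta,\varepsilon)$ a coalgebra, and for all $g,h,k$: $\Delta(kh)=\Delta(k)\Delta(h)$; $\varepsilon(kh_1)\varepsilon(h_2g)=\varepsilon(khg)=\varepsilon(kh_2)\varepsilon(h_1g)$; $(1\otimes\Delta(1))(\Delta(1)\otimes1)=\Delta^2(1)=(\Delta(1)\otimes1)(1\otimes\Delta(1))$; $h_1S(h_2)=\varepsilon_t(h)$; $S(h_1)h_2=\varepsilon_s(h)$; $S(h)=S(h_1)h_2S(h_3)$, where $\varepsilon_t(h)=\varepsilon(1_1h)1_2$, $\varepsilon_s(h)=1_1\varepsilon(h1_2)$. A partial representation of $H$ in $A$ is a linear $\pi\colon H\to A$ with, for all $h,k$: (PR1) $\pi(1_H)=1_A$; (PR2) $\pi(h)\pi(k_1)\pi(S(k_2))=\pi(hk_1)\pi(S(k_2))$; (PR3) $\pi(h)\pi(S(k_1))\pi(k_2)=\pi(hS(k_1))\pi(k_2)$;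 (PR4) $\pi(h_1)\pi(S(h_2))\pi(k)=\pi(h_1)\pi(S(h_2)k)$; (PR5) $\pi(S(h_1))\pi(h_2)\pi(k)=\pi(S(h_1))\pi(h_2k)$; (PR6) $\pi(h)=\pi(h_1)\pi(S(h_2))\pi(h_3)$. *)

theory Defs
  imports Main "HOL.Vector_Spaces"
begin

text \<open>Tensors in H (x) H and H (x) H (x) H are represented by finite lists of pairs / triples
(finite sums of simple tensors).  Two such lists denote the same tensor iff they agree under
all products of linear functionals; for vector spaces over a field this is exactly equality
in the tensor product (the canonical map H(x)H -> (H* (x) H*)* is injective).
Sweedler sums of k-multilinear expressions are sums over these lists.\<close>

definition lin_fun :: "('k::field \<Rightarrow> 'h::ab_group_add \<Rightarrow> 'h) \<Rightarrow> ('h \<Rightarrow> 'k) \<Rightarrow> bool" where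
  "lin_fun sc f \<longleftrightarrow> (\<forall>x y. f (x + y) = f x + f y) \<and> (\<forall>c x. f (sc c x) = c * f x)"

definition lin_map :: "('k::field \<Rightarrow> 'h::ab_group_add \<Rightarrow> 'h) \<Rightarrow> ('k \<Rightarrow> 'b::ab_group_add \<Rightarrow> 'b)
    \<Rightarrow> ('h \<Rightarrow> 'b) \<Rightarrow> bool" where
  "lin_map sc sc' f \<longleftrightarrow> (\<forall>x y. f (x + y) = f x + f y) \<and> (\<forall>c x. f (sc c x) = sc' c (f x))"

definition algebra_over :: "('k::field \<Rightarrow> 'a::ring_1 \<Rightarrow> 'a) \<Rightarrow> bool" where
  "algebra_over sc \<longleftrightarrow> vector_space sc \<and>
     (\<forall>c x y. sc c (x * y) = sc c x * y \<and> sc c (x * y) = x * sc c y)"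

definition teq2 :: "('k::field \<Rightarrow> 'h::ab_group_add \<Rightarrow> 'h) \<Rightarrow> ('h \<times> 'h) list \<Rightarrow> ('h \<times> 'h) list \<Rightarrow> bool" where
  "teq2 sc xs ys \<longleftrightarrow> (\<forall>\<phi> \<psi>. lin_fun sc \<phi> \<and> lin_fun sc \<psi> \<longrightarrow>
     (\<Sum>(a,b)\<leftarrow>xs. \<phi> a * \<psi> b) = (\<Sum>(a,b)\<leftarrow>ys. \<phi> a * \<psi> b))"

definition teq3 :: "('k::field \<Rightarrow> 'h::ab_group_add \<Rightarrow> 'h) \<Rightarrow> ('h \<times> 'h \<times> 'h) list \<Rightarrow> ('h \<times> 'h \<times> 'h) list \<Rightarrow> bool" where
  "teq3 sc xs ys \<longleftrightarrow> (\<forall>\<phi> \<psi> \<chi>. lin_fun sc \<phi> \<and> lin_fun sc \<psi> \<and> lin_fun sc \<chi> \<longrightarrow>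
     (\<Sum>(a,b,c)\<leftarrow>xs. \<phi> a * \<psi> b * \<chi> c) = (\<Sum>(a,b,c)\<leftarrow>ys. \<phi> a * \<psi> b * \<chi> c))"

text \<open>(Delta (x) id) o Delta and (id (x) Delta) o Delta.\<close>
definition Delta2 :: "('h \<Rightarrow> ('h \<times> 'h) list) \<Rightarrow> 'h \<Rightarrow> ('h \<times> 'h \<times> 'h) list" where
  "Delta2 \<Delta> h = concat (map (\<lambda>(a,b). map (\<lambda>(c,d). (c,d,b)) (\<Delta> a)) (\<Delta> h))"

definition Delta2' :: "('h \<Rightarrow> ('h \<times> 'h) list) \<Rightarrow> 'h \<Rightarrow> ('h \<times> 'h \<times> 'h) list" where
  "Delta2' \<Delta> h = concat (map (\<lambda>(a,b). map (\<lambda>(c,d). (a,c,d)) (\<Delta> b)) (\<Delta> h))"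

definition eps_t :: "('k::field \<Rightarrow> 'h::ring_1 \<Rightarrow> 'h) \<Rightarrow> ('h \<Rightarrow> ('h \<times> 'h) list) \<Rightarrow> ('h \<Rightarrow> 'k) \<Rightarrow> 'h \<Rightarrow> 'h" where
  "eps_t sc \<Delta> \<epsilon> h = (\<Sum>(a,b)\<leftarrow>\<Delta> 1. sc (\<epsilon> (a * h)) b)"

definition eps_s :: "('k::field \<Rightarrow> 'h::ring_1 \<Rightarrow> 'h) \<Rightarrow> ('h \<Rightarrow> ('h \<times> 'h) list) \<Rightarrow> ('h \<Rightarrow> 'k) \<Rightarrow> 'h \<Rightarrow> 'h" where
  "eps_s sc \<Delta> \<epsilon> h = (\<Sum>(a,b)\<leftarrow>\<Delta> 1. sc (\<epsilon> (h * b)) a)"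

definition weak_hopf_algebra ::
  "('k::field \<Rightarrow> 'h::ring_1 \<Rightarrow> 'h) \<Rightarrow> ('h \<Rightarrow> ('h \<times> 'h) list) \<Rightarrow> ('h \<Rightarrow> 'k) \<Rightarrow> ('h \<Rightarrow> 'h) \<Rightarrow> bool" where
  "weak_hopf_algebra sc \<Delta> \<epsilon> S \<longleftrightarrow>
     algebra_over sc \<and>
     \<comment> \<open>coalgebra: Delta linear, coassociative, counital; eps linear\<close>
     (\<forall>x y. teq2 sc (\<Delta> (x + y)) (\<Delta> x @ \<Delta> y)) \<and>
     (\<forall>c x. teq2 sc (\<Delta> (sc c x)) (map (\<lambda>(a,b). (sc c a, b)) (\<Delta> x))) \<and>
     lin_fun sc \<epsilon> \<and>
     (\<forall>h. teq3 sc (Delta2 \<Delta> h) (Delta2' \<Delta> h)) \<and>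
     (\<forall>h. (\<Sum>(a,b)\<leftarrow>\<Delta> h. sc (\<epsilon> a) b) = h) \<and>
     (\<forall>h. (\<Sum>(a,b)\<leftarrow>\<Delta> h. sc (\<epsilon> b) a) = h) \<and>
     \<comment> \<open>Delta multiplicative\<close>
     (\<forall>k h. teq2 sc (\<Delta> (k * h)) (concat (map (\<lambda>(a,b). map (\<lambda>(c,d). (a * c, b * d)) (\<Delta> h)) (\<Delta> k)))) \<and>
     \<comment> \<open>weak multiplicativity of the counit\<close>
     (\<forall>k h g. (\<Sum>(a,b)\<leftarrow>\<Delta> h. \<epsilon> (k * a) * \<epsilon> (b * g)) = \<epsilon> (k * h * g) \<and>
              \<epsilon> (k * h * g) = (\<Sum>(a,b)\<leftarrow>\<Delta> h. \<epsilon> (k * b) * \<epsilon> (a * g))) \<and>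
     \<comment> \<open>weak comultiplicativity of the unit\<close>
     teq3 sc (concat (map (\<lambda>(a,b). map (\<lambda>(c,d). (c, a * d, b)) (\<Delta> 1)) (\<Delta> 1))) (Delta2 \<Delta> 1) \<and>
     teq3 sc (Delta2 \<Delta> 1) (concat (map (\<lambda>(a,b). map (\<lambda>(c,d). (a, b * c, d)) (\<Delta> 1)) (\<Delta> 1))) \<and>
     \<comment> \<open>antipode\<close>
     lin_map sc sc S \<and>
     (\<forall>h. (\<Sum>(a,b)\<leftarrow>\<Delta> h. a * S b) = eps_t sc \<Delta> \<epsilon> h) \<and>
     (\<forall>h. (\<Sum>(a,b)\<leftarrow>\<Delta> h. S a * b) = eps_s sc \<Delta> \<epsilon> h) \<and>
     (\<forall>h. S h = (\<Sum>(a,b,c)\<leftarrow>Delta2 \<Delta> h. S a * b * S c))"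

definition partial_rep ::
  "('k::field \<Rightarrow> 'h::ring_1 \<Rightarrow> 'h) \<Rightarrow> ('h \<Rightarrow> ('h \<times> 'h) list) \<Rightarrow> ('h \<Rightarrow> 'h)
   \<Rightarrow> ('k \<Rightarrow> 'a::ring_1 \<Rightarrow> 'a) \<Rightarrow> ('h \<Rightarrow> 'a) \<Rightarrow> bool" where
  "partial_rep sc \<Delta> S scA \<pi> \<longleftrightarrow>
     lin_map sc scA \<pi> \<and>
     \<pi> 1 = 1 \<and>
     (\<forall>h k. (\<Sum>(a,b)\<leftarrow>\<Delta> k. \<pi> h * \<pi> a * \<pi> (S b)) = (\<Sum>(a,b)\<leftarrow>\<Delta> k. \<pi> (h * a) * \<pi> (S b))) \<and>
     (\<forall>h k. (\<Sum>(a,b)\<leftarrow>\<Delta> k. \<pi> h * \<pi> (S a) * \<pi> b) = (\<Sum>(a,b)\<leftarrow>\<Delta> k. \<pi> (h * S a) * \<pi> b)) \<and>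
     (\<forall>h k. (\<Sum>(a,b)\<leftarrow>\<Delta> h. \<pi> a * \<pi> (S b) * \<pi> k) = (\<Sum>(a,b)\<leftarrow>\<Delta> h. \<pi> a * \<pi> (S b * k))) \<and>
     (\<forall>h k. (\<Sum>(a,b)\<leftarrow>\<Delta> h. \<pi> (S a) * \<pi> b * \<pi> k) = (\<Sum>(a,b)\<leftarrow>\<Delta> h. \<pi> (S a) * \<pi> (b * k))) \<and>
     (\<forall>h. \<pi> h = (\<Sum>(a,b,c)\<leftarrow>Delta2 \<Delta> h. \<pi> a * \<pi> (S b) * \<pi> c))"

definition is_representation ::
  "('k::field \<Rightarrow> 'h::ring_1 \<Rightarrow> 'h) \<Rightarrow> ('k \<Rightarrow> 'a::ring_1 \<Rightarrow> 'a) \<Rightarrow> ('h \<Rightarrow> 'a) \<Rightarrow> bool" where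
  "is_representation sc scA \<pi> \<longleftrightarrow>
     lin_map sc scA \<pi> \<and> \<pi> 1 = 1 \<and> (\<forall>h k. \<pi> (h * k) = \<pi> h * \<pi> k)"

end

theory Submission
  imports Defs
begin


lemma sum_list_expand:
  assumes VV: "vector_space scV"
    and f: "\<And>x. x \<in> set L \<Longrightarrow> f x = (\<Sum>i\<in>I. scV (c x i) (G i))"
  shows "sum_list (map f L) = (\<Sum>i\<in>I. scV (sum_list (map (\<lambda>x. c x i) L)) (G i))"
  using f
proof (induction L)
  case Nil
  interpret V: vector_space scV by fact
  show ?case by simp
next
  case (Cons a L)
  interpret V: vector_space scV by fact
  have "sum_list (map f (a # L)) = f a + sum_list (map f L)" by simp
  also have "\<dots> = (\<Sum>i\<in>I. scV (c a i) (G i)) + (\<Sum>i\<in>I. scV (sum_list (map (\<lambda>x. c x i) L)) (G i))"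
    using Cons by simp
  also have "\<dots> = (\<Sum>i\<in>I. scV (c a i + sum_list (map (\<lambda>x. c x i) L)) (G i))"
    by (simp add: sum.distrib V.scale_left_distrib)
  finally show ?case by simp
qed

lemma basis_coord:
  fixes sc :: "'k::field \<Rightarrow> 'h::ab_group_add \<Rightarrow> 'h"
  assumes VS: "vector_space sc"
  obtains r :: "'h \<Rightarrow> 'h \<Rightarrow> 'k" where
    "\<And>b. lin_fun sc (\<lambda>v. r v b)"
    "\<And>v. finite {b. r v b \<noteq> 0}"
    "\<And>v F. finite F \<Longrightarrow> {b. r v b \<noteq> 0} \<subseteq> F \<Longrightarrow> (\<Sum>b\<in>F. sc (r v b) b) = v"
proof -
  interpret H: vector_space sc by fact
  obtain B where B: "H.independent B" "UNIV \<subseteq> H.span B"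
    using H.basis_exists[of UNIV] by blast
  have sp: "v \<in> H.span B" for v using B by auto
  show ?thesis
  proof
    show "lin_fun sc (\<lambda>v. H.representation B v b)" for b
      unfolding lin_fun_def
      using H.representation_add[OF B(1) sp sp] H.representation_scale[OF B(1) sp] by simp
    show "finite {b. H.representation B v b \<noteq> 0}" for v by (rule H.finite_representation)
    show "(\<Sum>b\<in>F. sc (H.representation B v b) b) = v" if "finite F" "{b. H.representation B v b \<noteq> 0} \<subseteq> F" for v F
    proof -
      have "(\<Sum>b\<in>F. sc (H.representation B v b) b) = (\<Sum>b | H.representation B v b \<noteq> 0. sc (H.representation B v b) b)"
        using that by (intro sum.mono_neutral_right) auto
      also have "\<dots> = v" by (rule H.sum_nonzero_representation_eq[OF B(1) sp])
      finally show ?thesis .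
    qed
  qed
qed

lemma teq2_transfer:
  fixes sc :: "'k::field \<Rightarrow> 'h::ab_group_add \<Rightarrow> 'h" and scV :: "'k \<Rightarrow> 'v::ab_group_add \<Rightarrow> 'v"
    and g :: "'h \<Rightarrow> 'h \<Rightarrow> 'v"
  assumes VS: "vector_space sc" and VV: "vector_space scV" and T: "teq2 sc xs ys"
    and g1: "\<And>x y z. g (x + y) z = g x z + g y z" and g2: "\<And>c x z. g (sc c x) z = scV c (g x z)"
    and g3: "\<And>x y z. g z (x + y) = g z x + g z y" and g4: "\<And>c x z. g z (sc c x) = scV c (g z x)"
  shows "(\<Sum>(a,b)\<leftarrow>xs. g a b) = (\<Sum>(a,b)\<leftarrow>ys. g a b)"
proof -
  interpret V: vector_space scV by fact
  obtain r where r1: "\<And>b. lin_fun sc (\<lambda>v. r v b)" and r2: "\<And>v. finite {b. r v b \<noteq> 0}"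
    and r3: "\<And>v F. finite F \<Longrightarrow> {b. r v b \<noteq> 0} \<subseteq> F \<Longrightarrow> (\<Sum>b\<in>F. sc (r v b) b) = v"
    using basis_coord[OF VS] by blast
  define C where "C = fst ` set xs \<union> snd ` set xs \<union> fst ` set ys \<union> snd ` set ys"
  define F where "F = (\<Union>v\<in>C. {b. r v b \<noteq> 0})"
  have finC: "finite C" unfolding C_def by simp
  have fin: "finite F" unfolding F_def using finC r2 by auto
  have ex: "v \<in> C \<Longrightarrow> (\<Sum>b\<in>F. sc (r v b) b) = v" for v
    by (rule r3[OF fin]) (auto simp: F_def)
  have gs1: "g (\<Sum>b\<in>F. f b) z = (\<Sum>b\<in>F. g (f b) z)" for f z
  proof -
    interpret additive "\<lambda>x. g x z" by standard (rule g1)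
    show ?thesis by (rule sum)
  qed
  have gs2: "g z (\<Sum>b\<in>F. f b) = (\<Sum>b\<in>F. g z (f b))" for f z
  proof -
    interpret additive "\<lambda>x. g z x" by standard (rule g3)
    show ?thesis by (rule sum)
  qed
  have mC: "fst x \<in> C" "snd x \<in> C" if "x \<in> set xs \<union> set ys" for x
    using that unfolding C_def by blast+
  have key: "g v w = (\<Sum>p\<in>F\<times>F. scV (r v (snd p) * r w (fst p)) (g (snd p) (fst p)))"
    if "v \<in> C" "w \<in> C" for v w
  proof -
    have "g v w = g (\<Sum>b\<in>F. sc (r v b) b) (\<Sum>b\<in>F. sc (r w b) b)" using ex that by simp
    also have "\<dots> = (\<Sum>b\<in>F. \<Sum>b'\<in>F. scV (r v b' * r w b) (g b' b))"
      by (simp add: gs1 gs2 g2 g4 V.scale_sum_right mult.commute)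
    also have "\<dots> = (\<Sum>p\<in>F\<times>F. scV (r v (snd p) * r w (fst p)) (g (snd p) (fst p)))"
      by (simp add: sum.cartesian_product split_beta')
    finally show ?thesis .
  qed
  have L: "(\<Sum>(a,b)\<leftarrow>zs. g a b) = (\<Sum>p\<in>F\<times>F. scV (\<Sum>(a,b)\<leftarrow>zs. r a (snd p) * r b (fst p)) (g (snd p) (fst p)))"
    if "set zs \<subseteq> set xs \<union> set ys" for zs
  proof -
    have "(\<Sum>(a,b)\<leftarrow>zs. g a b) = sum_list (map (\<lambda>x. g (fst x) (snd x)) zs)"
      by (simp add: case_prod_beta')
    also have "\<dots> = (\<Sum>p\<in>F\<times>F. scV (sum_list (map (\<lambda>x. r (fst x) (snd p) * r (snd x) (fst p)) zs)) (g (snd p) (fst p)))"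
      apply (rule sum_list_expand[OF VV])
      apply (rule key)
      using that mC by blast+
    also have "\<dots> = (\<Sum>p\<in>F\<times>F. scV (\<Sum>(a,b)\<leftarrow>zs. r a (snd p) * r b (fst p)) (g (snd p) (fst p)))"
      by (simp add: case_prod_beta')
    finally show ?thesis .
  qed
  have E: "(\<Sum>(a,b)\<leftarrow>xs. r a i * r b j) = (\<Sum>(a,b)\<leftarrow>ys. r a i * r b j)" for i j
    using T r1 unfolding teq2_def by blast
  show ?thesis using L[of xs] L[of ys] E by simp
qed



lemma teq3_transfer:
  fixes sc :: "'k::field \<Rightarrow> 'h::ab_group_add \<Rightarrow> 'h" and scV :: "'k \<Rightarrow> 'v::ab_group_add \<Rightarrow> 'v"
    and g :: "'h \<Rightarrow> 'h \<Rightarrow> 'h \<Rightarrow> 'v"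
  assumes VS: "vector_space sc" and VV: "vector_space scV" and T: "teq3 sc xs ys"
    and g1: "\<And>x y z w. g (x + y) z w = g x z w + g y z w" and g2: "\<And>c x z w. g (sc c x) z w = scV c (g x z w)"
    and g3: "\<And>x y z w. g z (x + y) w = g z x w + g z y w" and g4: "\<And>c x z w. g z (sc c x) w = scV c (g z x w)"
    and g5: "\<And>x y z w. g z w (x + y) = g z w x + g z w y" and g6: "\<And>c x z w. g z w (sc c x) = scV c (g z w x)"
  shows "(\<Sum>(a,b,c)\<leftarrow>xs. g a b c) = (\<Sum>(a,b,c)\<leftarrow>ys. g a b c)"
proof -
  interpret V: vector_space scV by fact
  obtain r where r1: "\<And>b. lin_fun sc (\<lambda>v. r v b)" and r2: "\<And>v. finite {b. r v b \<noteq> 0}"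
    and r3: "\<And>v F. finite F \<Longrightarrow> {b. r v b \<noteq> 0} \<subseteq> F \<Longrightarrow> (\<Sum>b\<in>F. sc (r v b) b) = v"
    using basis_coord[OF VS] by blast
  define C where "C = fst ` set xs \<union> (fst \<circ> snd) ` set xs \<union> (snd \<circ> snd) ` set xs
     \<union> fst ` set ys \<union> (fst \<circ> snd) ` set ys \<union> (snd \<circ> snd) ` set ys"
  define F where "F = (\<Union>v\<in>C. {b. r v b \<noteq> 0})"
  have finC: "finite C" unfolding C_def by simp
  have fin: "finite F" unfolding F_def using finC r2 by auto
  have ex: "v \<in> C \<Longrightarrow> (\<Sum>b\<in>F. sc (r v b) b) = v" for v
    by (rule r3[OF fin]) (auto simp: F_def)
  have gs1: "g (\<Sum>b\<in>F. f b) z w = (\<Sum>b\<in>F. g (f b) z w)" for f z w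
  proof -
    interpret additive "\<lambda>x. g x z w" by standard (rule g1)
    show ?thesis by (rule sum)
  qed
  have gs2: "g z (\<Sum>b\<in>F. f b) w = (\<Sum>b\<in>F. g z (f b) w)" for f z w
  proof -
    interpret additive "\<lambda>x. g z x w" by standard (rule g3)
    show ?thesis by (rule sum)
  qed
  have gs3: "g z w (\<Sum>b\<in>F. f b) = (\<Sum>b\<in>F. g z w (f b))" for f z w
  proof -
    interpret additive "\<lambda>x. g z w x" by standard (rule g5)
    show ?thesis by (rule sum)
  qed
  have mC: "fst x \<in> C" "fst (snd x) \<in> C" "snd (snd x) \<in> C" if "x \<in> set xs \<union> set ys" for x
    using that unfolding C_def by auto
  have key: "g u v w = (\<Sum>p\<in>F\<times>F\<times>F. scV (r u (snd (snd p)) * r v (fst (snd p)) * r w (fst p))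
                 (g (snd (snd p)) (fst (snd p)) (fst p)))"
    if "u \<in> C" "v \<in> C" "w \<in> C" for u v w
  proof -
    have "g u v w = g (\<Sum>b\<in>F. sc (r u b) b) (\<Sum>b\<in>F. sc (r v b) b) (\<Sum>b\<in>F. sc (r w b) b)"
      using ex that by simp
    also have "\<dots> = (\<Sum>b\<in>F. \<Sum>b'\<in>F. \<Sum>b''\<in>F. scV (r u b'' * r v b' * r w b) (g b'' b' b))"
      by (simp add: gs1 gs2 gs3 g2 g4 g6 V.scale_sum_right mult.commute mult.left_commute)
    also have "\<dots> = (\<Sum>p\<in>F\<times>F\<times>F. scV (r u (snd (snd p)) * r v (fst (snd p)) * r w (fst p))
                 (g (snd (snd p)) (fst (snd p)) (fst p)))"
      by (simp add: sum.cartesian_product split_beta')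
    finally show ?thesis .
  qed
  have L: "(\<Sum>(a,b,c)\<leftarrow>zs. g a b c) = (\<Sum>p\<in>F\<times>F\<times>F. scV (\<Sum>(a,b,c)\<leftarrow>zs. r a (snd (snd p)) * r b (fst (snd p)) * r c (fst p))
                 (g (snd (snd p)) (fst (snd p)) (fst p)))"
    if "set zs \<subseteq> set xs \<union> set ys" for zs
  proof -
    have "(\<Sum>(a,b,c)\<leftarrow>zs. g a b c) = sum_list (map (\<lambda>x. g (fst x) (fst (snd x)) (snd (snd x))) zs)"
      by (simp add: case_prod_beta')
    also have "\<dots> = (\<Sum>p\<in>F\<times>F\<times>F. scV (sum_list (map (\<lambda>x. r (fst x) (snd (snd p)) * r (fst (snd x)) (fst (snd p)) * r (snd (snd x)) (fst p)) zs))
                 (g (snd (snd p)) (fst (snd p)) (fst p)))"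
      apply (rule sum_list_expand[OF VV])
      apply (rule key)
      using that mC by blast+
    finally show ?thesis by (simp add: case_prod_beta')
  qed
  have E: "(\<Sum>(a,b,c)\<leftarrow>xs. r a i * r b j * r c l) = (\<Sum>(a,b,c)\<leftarrow>ys. r a i * r b j * r c l)" for i j l
    using T r1 unfolding teq3_def by blast
  show ?thesis using L[of xs] L[of ys] E by simp
qed



lemma sum_list_concat': "sum_list (concat xss) = sum_list (map sum_list (xss::'a::monoid_add list list))"
  by (induction xss) auto

lemma sl_cong2: "(\<And>a b. (a,b) \<in> set L \<Longrightarrow> f a b = g a b) \<Longrightarrow> (\<Sum>(a,b)\<leftarrow>L. f a b) = (\<Sum>(a,b)\<leftarrow>L. g a b)"
  by (induction L) auto

lemma sl_mult_r2: "(\<Sum>(a,b)\<leftarrow>L. f a b) * (y::'a::ring) = (\<Sum>(a,b)\<leftarrow>L. f a b * y)"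
  by (induction L) (auto simp: distrib_right)

lemma sl_mult_l2: "(y::'a::ring) * (\<Sum>(a,b)\<leftarrow>L. f a b) = (\<Sum>(a,b)\<leftarrow>L. y * f a b)"
  by (induction L) (auto simp: distrib_left)

lemma sl_add2: "(\<Sum>(a,b)\<leftarrow>L. f a b + g a b) = (\<Sum>(a,b)\<leftarrow>L. f a b) + (\<Sum>(a,b)\<leftarrow>L. (g a b::'a::ab_group_add))"
  by (induction L) (auto simp: algebra_simps)

lemma sl_swap2: "(\<Sum>(a,b)\<leftarrow>L. \<Sum>(c,d)\<leftarrow>M. f a b c d) = (\<Sum>(c,d)\<leftarrow>M. \<Sum>(a,b)\<leftarrow>L. (f a b c d::'a::ab_group_add))"
  by (induction L) (auto simp: sl_add2)

lemma sl_lin2: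
  fixes F :: "'a::ab_group_add \<Rightarrow> 'b::ab_group_add"
  assumes "\<And>x y. F (x + y) = F x + F y"
  shows "F (\<Sum>(a,b)\<leftarrow>L. f a b) = (\<Sum>(a,b)\<leftarrow>L. (F (f a b) :: 'b::ab_group_add))"
proof -
  interpret additive F by standard (rule assms)
  show ?thesis by (induction L) (auto simp: add zero)
qed

lemma Delta2_sum: "(\<Sum>(a,b,c)\<leftarrow>Delta2 \<Delta> h. g a b c) = (\<Sum>(x,c)\<leftarrow>\<Delta> h. \<Sum>(a,b)\<leftarrow>\<Delta> x. g a b c)"
  unfolding Delta2_def by (simp add: sum_list_concat' map_concat comp_def case_prod_beta')

lemma Delta2'_sum: "(\<Sum>(a,b,c)\<leftarrow>Delta2' \<Delta> h. g a b c) = (\<Sum>(a,w)\<leftarrow>\<Delta> h. \<Sum>(b,c)\<leftarrow>\<Delta> w. g a b c)"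
  unfolding Delta2'_def by (simp add: sum_list_concat' map_concat comp_def case_prod_beta')

lemma prod_sum: "(\<Sum>(a,b)\<leftarrow>concat (map (\<lambda>(a,b). map (\<lambda>(c,d). (a * c, b * d)) (\<Delta> k)) (\<Delta> h)). g a b)
   = (\<Sum>(a,b)\<leftarrow>\<Delta> h. \<Sum>(c,d)\<leftarrow>\<Delta> k. g (a*c) (b*d))"
  by (simp add: sum_list_concat' map_concat comp_def case_prod_beta')



locale wpr =
  fixes sc :: "'k::field \<Rightarrow> 'h::ring_1 \<Rightarrow> 'h"
    and \<Delta> :: "'h \<Rightarrow> ('h \<times> 'h) list" and \<epsilon> :: "'h \<Rightarrow> 'k" and S :: "'h \<Rightarrow> 'h"
    and scA :: "'k \<Rightarrow> 'a::ring_1 \<Rightarrow> 'a" and \<pi> :: "'h \<Rightarrow> 'a"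
  assumes W: "weak_hopf_algebra sc \<Delta> \<epsilon> S" and AA: "algebra_over scA"
    and P: "partial_rep sc \<Delta> S scA \<pi>"
begin

lemma VH: "vector_space sc" using W unfolding weak_hopf_algebra_def algebra_over_def by blast
lemma VA: "vector_space scA" using AA unfolding algebra_over_def by blast

sublocale H: vector_space sc by (rule VH)
sublocale A: vector_space scA by (rule VA)

lemma scm1: "sc c x * y = sc c (x * y)" and scm2: "x * sc c y = sc c (x * y)"
  using W unfolding weak_hopf_algebra_def algebra_over_def by metis+
lemma scAm1: "scA c x * y = scA c (x * y)" and scAm2: "x * scA c y = scA c (x * y)"
  using AA unfolding algebra_over_def by metis+

lemma pi_add: "\<pi> (x + y) = \<pi> x + \<pi> y" and pi_sc: "\<pi> (sc c x) = scA c (\<pi> x)"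
  using P unfolding partial_rep_def lin_map_def by blast+
lemma S_add: "S (x + y) = S x + S y" and S_sc: "S (sc c x) = sc c (S x)"
  using W unfolding weak_hopf_algebra_def lin_map_def by blast+
lemma eps_add: "\<epsilon> (x + y) = \<epsilon> x + \<epsilon> y" and eps_sc: "\<epsilon> (sc c x) = c * \<epsilon> x"
  using W unfolding weak_hopf_algebra_def lin_fun_def by blast+

lemmas lin_simps = pi_add pi_sc S_add S_sc eps_add eps_sc scm1 scm2 scAm1 scAm2
  distrib_left distrib_right H.scale_left_distrib A.scale_left_distrib
  H.scale_right_distrib A.scale_right_distrib sl_add2

lemma pi_1: "\<pi> 1 = 1" using P unfolding partial_rep_def by blast

lemma coassoc_W: "teq3 sc (Delta2 \<Delta> h) (Delta2' \<Delta> h)"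
  using W unfolding weak_hopf_algebra_def by blast
lemma mult_W: "teq2 sc (\<Delta> (k * h)) (concat (map (\<lambda>(a,b). map (\<lambda>(c,d). (a * c, b * d)) (\<Delta> h)) (\<Delta> k)))"
  using W unfolding weak_hopf_algebra_def by blast
lemma counit1: "(\<Sum>(a,b)\<leftarrow>\<Delta> h. sc (\<epsilon> a) b) = h"
  and counit2: "(\<Sum>(a,b)\<leftarrow>\<Delta> h. sc (\<epsilon> b) a) = h"
  using W unfolding weak_hopf_algebra_def by blast+
lemma wcounit: "\<epsilon> (k * h * g) = (\<Sum>(a,b)\<leftarrow>\<Delta> h. \<epsilon> (k * a) * \<epsilon> (b * g))"
  using W unfolding weak_hopf_algebra_def by metis
lemma ant_t: "(\<Sum>(a,b)\<leftarrow>\<Delta> h. a * S b) = eps_t sc \<Delta> \<epsilon> h"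
  and ant_s: "(\<Sum>(a,b)\<leftarrow>\<Delta> h. S a * b) = eps_s sc \<Delta> \<epsilon> h"
  using W unfolding weak_hopf_algebra_def by blast+

lemma PR2: "(\<Sum>(a,b)\<leftarrow>\<Delta> k. \<pi> h * \<pi> a * \<pi> (S b)) = (\<Sum>(a,b)\<leftarrow>\<Delta> k. \<pi> (h * a) * \<pi> (S b))"
  and PR5: "(\<Sum>(a,b)\<leftarrow>\<Delta> h. \<pi> (S a) * \<pi> b * \<pi> k) = (\<Sum>(a,b)\<leftarrow>\<Delta> h. \<pi> (S a) * \<pi> (b * k))"
  using P unfolding partial_rep_def by blast+
lemma PR6: "\<pi> h = (\<Sum>(x,c)\<leftarrow>\<Delta> h. \<Sum>(a,b)\<leftarrow>\<Delta> x. \<pi> a * \<pi> (S b) * \<pi> c)"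
  using P unfolding partial_rep_def Delta2_sum by blast

lemma pi_sl2: "\<pi> (\<Sum>(a,b)\<leftarrow>L. f a b) = (\<Sum>(a,b)\<leftarrow>L. \<pi> (f a b))"
  by (rule sl_lin2) (rule pi_add)
lemma sc_sl2: "sc c (\<Sum>(a,b)\<leftarrow>L. f a b) = (\<Sum>(a,b)\<leftarrow>L. sc c (f a b))"
  by (rule sl_lin2) (rule H.scale_right_distrib)
lemma scA_sl2: "scA c (\<Sum>(a,b)\<leftarrow>L. f a b) = (\<Sum>(a,b)\<leftarrow>L. scA c (f a b))"
  by (rule sl_lin2) (rule A.scale_right_distrib)
lemma scl_sl2: "sc (\<Sum>(a,b)\<leftarrow>L. f a b) v = (\<Sum>(a,b)\<leftarrow>L. sc (f a b) v)"
  by (induction L) (auto simp: H.scale_left_distrib)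
lemma scAl_sl2: "scA (\<Sum>(a,b)\<leftarrow>L. f a b) v = (\<Sum>(a,b)\<leftarrow>L. scA (f a b) v)"
  by (induction L) (auto simp: A.scale_left_distrib)
lemma eps_sl2: "\<epsilon> (\<Sum>(a,b)\<leftarrow>L. f a b) = (\<Sum>(a,b)\<leftarrow>L. \<epsilon> (f a b))"
  by (rule sl_lin2) (rule eps_add)

lemma coassoc:
  fixes scV :: "'k \<Rightarrow> 'v::ab_group_add \<Rightarrow> 'v" and g :: "'h \<Rightarrow> 'h \<Rightarrow> 'h \<Rightarrow> 'v"
  assumes VV: "vector_space scV"
    and g1: "\<And>x y z w. g (x + y) z w = g x z w + g y z w" and g2: "\<And>c x z w. g (sc c x) z w = scV c (g x z w)"
    and g3: "\<And>x y z w. g z (x + y) w = g z x w + g z y w" and g4: "\<And>c x z w. g z (sc c x) w = scV c (g z x w)"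
    and g5: "\<And>x y z w. g z w (x + y) = g z w x + g z w y" and g6: "\<And>c x z w. g z w (sc c x) = scV c (g z w x)"
  shows "(\<Sum>(x,c)\<leftarrow>\<Delta> h. \<Sum>(a,b)\<leftarrow>\<Delta> x. g a b c) = (\<Sum>(a,w)\<leftarrow>\<Delta> h. \<Sum>(b,c)\<leftarrow>\<Delta> w. g a b c)"
proof -
  have "(\<Sum>(a,b,c)\<leftarrow>Delta2 \<Delta> h. g a b c) = (\<Sum>(a,b,c)\<leftarrow>Delta2' \<Delta> h. g a b c)"
    by (rule teq3_transfer[OF VH VV coassoc_W[of h]]) (fact g1 g2 g3 g4 g5 g6)+
  then show ?thesis by (simp only: Delta2_sum Delta2'_sum)
qed

lemma multi:
  fixes scV :: "'k \<Rightarrow> 'v::ab_group_add \<Rightarrow> 'v" and g :: "'h \<Rightarrow> 'h \<Rightarrow> 'v"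
  assumes VV: "vector_space scV"
    and g1: "\<And>x y z. g (x + y) z = g x z + g y z" and g2: "\<And>c x z. g (sc c x) z = scV c (g x z)"
    and g3: "\<And>x y z. g z (x + y) = g z x + g z y" and g4: "\<And>c x z. g z (sc c x) = scV c (g z x)"
  shows "(\<Sum>(a,b)\<leftarrow>\<Delta> (h * k). g a b) = (\<Sum>(a,b)\<leftarrow>\<Delta> h. \<Sum>(c,d)\<leftarrow>\<Delta> k. g (a*c) (b*d))"
  using teq2_transfer[OF VH VV mult_W[of h k], of g] assms
  unfolding prod_sum by blast

end


context wpr begin

lemma Lu: "(\<Sum>(a,b)\<leftarrow>\<Delta> (h*k). sc (\<epsilon> (u*a)) b) = (\<Sum>(a,b)\<leftarrow>\<Delta> h. sc (\<epsilon> (u*a)) b) * k"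
proof -
  have s6: "(\<Sum>(y,q)\<leftarrow>\<Delta> w. \<Sum>(c,d)\<leftarrow>\<Delta> k. sc (\<epsilon>(y*c)) (q*d)) = w*k" for w
  proof -
    have "(\<Sum>(a,b)\<leftarrow>\<Delta> (w*k). sc (\<epsilon> a) b) = (\<Sum>(y,q)\<leftarrow>\<Delta> w. \<Sum>(c,d)\<leftarrow>\<Delta> k. sc (\<epsilon>(y*c)) (q*d))"
      by (rule multi[OF VH]) (simp_all add: lin_simps)
    then show ?thesis using counit1 by simp
  qed
  have "(\<Sum>(a,b)\<leftarrow>\<Delta> (h*k). sc (\<epsilon> (u*a)) b) = (\<Sum>(a,b)\<leftarrow>\<Delta> h. \<Sum>(c,d)\<leftarrow>\<Delta> k. sc (\<epsilon> (u*(a*c))) (b*d))"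
    by (rule multi[OF VH]) (simp_all add: lin_simps)
  also have "\<dots> = (\<Sum>(a,b)\<leftarrow>\<Delta> h. \<Sum>(c,d)\<leftarrow>\<Delta> k. \<Sum>(x,y)\<leftarrow>\<Delta> a. sc (\<epsilon>(u*x) * \<epsilon>(y*c)) (b*d))"
    by (simp add: mult.assoc[symmetric] wcounit scl_sl2)
  also have "\<dots> = (\<Sum>(a,b)\<leftarrow>\<Delta> h. \<Sum>(x,y)\<leftarrow>\<Delta> a. \<Sum>(c,d)\<leftarrow>\<Delta> k. sc (\<epsilon>(u*x) * \<epsilon>(y*c)) (b*d))"
    by (rule sl_cong2) (rule sl_swap2)
  also have "\<dots> = (\<Sum>(x,w)\<leftarrow>\<Delta> h. \<Sum>(y,q)\<leftarrow>\<Delta> w. \<Sum>(c,d)\<leftarrow>\<Delta> k. sc (\<epsilon>(u*x) * \<epsilon>(y*c)) (q*d))"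
    by (rule coassoc[OF VH, where g = "\<lambda>x y q. \<Sum>(c,d)\<leftarrow>\<Delta> k. sc (\<epsilon>(u*x) * \<epsilon>(y*c)) (q*d)"])
       (simp_all add: lin_simps sc_sl2 mult_ac)
  also have "\<dots> = (\<Sum>(x,w)\<leftarrow>\<Delta> h. sc (\<epsilon>(u*x)) (\<Sum>(y,q)\<leftarrow>\<Delta> w. \<Sum>(c,d)\<leftarrow>\<Delta> k. sc (\<epsilon>(y*c)) (q*d)))"
    by (simp add: sc_sl2)
  also have "\<dots> = (\<Sum>(x,w)\<leftarrow>\<Delta> h. sc (\<epsilon>(u*x)) (w*k))"
    by (simp add: s6)
  also have "\<dots> = (\<Sum>(x,w)\<leftarrow>\<Delta> h. sc (\<epsilon>(u*x)) w) * k"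
    by (simp add: sl_mult_r2 scm1)
  finally show ?thesis .
qed

lemma Rv: "(\<Sum>(a,w)\<leftarrow>\<Delta> (h*k). sc (\<epsilon> (w*v)) a) = h * (\<Sum>(a,w)\<leftarrow>\<Delta> k. sc (\<epsilon> (w*v)) a)"
proof -
  have s6: "(\<Sum>(c,p)\<leftarrow>\<Delta> z. \<Sum>(a,b)\<leftarrow>\<Delta> h. sc (\<epsilon>(b*p)) (a*c)) = h*z" for z
  proof -
    have "(\<Sum>(a,b)\<leftarrow>\<Delta> (h*z). sc (\<epsilon> b) a) = (\<Sum>(a,b)\<leftarrow>\<Delta> h. \<Sum>(c,p)\<leftarrow>\<Delta> z. sc (\<epsilon>(b*p)) (a*c))"
      by (rule multi[OF VH]) (simp_all add: lin_simps)
    also have "\<dots> = (\<Sum>(c,p)\<leftarrow>\<Delta> z. \<Sum>(a,b)\<leftarrow>\<Delta> h. sc (\<epsilon>(b*p)) (a*c))"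
      by (rule sl_swap2)
    finally show ?thesis using counit2 by simp
  qed
  have "(\<Sum>(a,w)\<leftarrow>\<Delta> (h*k). sc (\<epsilon> (w*v)) a) = (\<Sum>(a,b)\<leftarrow>\<Delta> h. \<Sum>(c,d)\<leftarrow>\<Delta> k. sc (\<epsilon> (b*d*v)) (a*c))"
    by (rule multi[OF VH]) (simp_all add: lin_simps)
  also have "\<dots> = (\<Sum>(a,b)\<leftarrow>\<Delta> h. \<Sum>(c,d)\<leftarrow>\<Delta> k. \<Sum>(p,q)\<leftarrow>\<Delta> d. sc (\<epsilon>(b*p) * \<epsilon>(q*v)) (a*c))"
    by (simp add: wcounit scl_sl2)
  also have "\<dots> = (\<Sum>(c,d)\<leftarrow>\<Delta> k. \<Sum>(a,b)\<leftarrow>\<Delta> h. \<Sum>(p,q)\<leftarrow>\<Delta> d. sc (\<epsilon>(b*p) * \<epsilon>(q*v)) (a*c))"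
    by (rule sl_swap2)
  also have "\<dots> = (\<Sum>(c,d)\<leftarrow>\<Delta> k. \<Sum>(p,q)\<leftarrow>\<Delta> d. \<Sum>(a,b)\<leftarrow>\<Delta> h. sc (\<epsilon>(b*p) * \<epsilon>(q*v)) (a*c))"
    by (rule sl_cong2) (rule sl_swap2)
  also have "\<dots> = (\<Sum>(z,q)\<leftarrow>\<Delta> k. \<Sum>(c,p)\<leftarrow>\<Delta> z. \<Sum>(a,b)\<leftarrow>\<Delta> h. sc (\<epsilon>(b*p) * \<epsilon>(q*v)) (a*c))"
    by (rule coassoc[OF VH, where g = "\<lambda>c p q. \<Sum>(a,b)\<leftarrow>\<Delta> h. sc (\<epsilon>(b*p) * \<epsilon>(q*v)) (a*c)", symmetric])
       (simp_all add: lin_simps sc_sl2 mult_ac)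
  also have "\<dots> = (\<Sum>(z,q)\<leftarrow>\<Delta> k. sc (\<epsilon>(q*v)) (\<Sum>(c,p)\<leftarrow>\<Delta> z. \<Sum>(a,b)\<leftarrow>\<Delta> h. sc (\<epsilon>(b*p)) (a*c)))"
    by (simp add: sc_sl2 mult_ac)
  also have "\<dots> = (\<Sum>(z,q)\<leftarrow>\<Delta> k. sc (\<epsilon>(q*v)) (h*z))"
    by (simp add: s6)
  also have "\<dots> = h * (\<Sum>(z,q)\<leftarrow>\<Delta> k. sc (\<epsilon>(q*v)) z)"
    by (simp add: sl_mult_l2 scm2)
  finally show ?thesis .
qed

end


context wpr begin

lemma CC: "(\<Sum>(x,c)\<leftarrow>L. \<pi> (eps_t sc \<Delta> \<epsilon> x) * \<pi> (f c))
   = (\<Sum>(u,v)\<leftarrow>\<Delta> 1. \<pi> v * \<pi> (\<Sum>(x,c)\<leftarrow>L. sc (\<epsilon> (u*x)) (f c)))"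
proof -
  have e: "\<pi> (eps_t sc \<Delta> \<epsilon> x) = (\<Sum>(u,v)\<leftarrow>\<Delta> 1. scA (\<epsilon> (u*x)) (\<pi> v))" for x
    unfolding eps_t_def by (simp add: pi_sl2 pi_sc)
  have "(\<Sum>(x,c)\<leftarrow>L. \<pi> (eps_t sc \<Delta> \<epsilon> x) * \<pi> (f c))
      = (\<Sum>(x,c)\<leftarrow>L. \<Sum>(u,v)\<leftarrow>\<Delta> 1. \<pi> v * \<pi> (sc (\<epsilon> (u*x)) (f c)))"
    by (simp add: e sl_mult_r2 scAm1 scAm2 pi_sc)
  also have "\<dots> = (\<Sum>(u,v)\<leftarrow>\<Delta> 1. \<Sum>(x,c)\<leftarrow>L. \<pi> v * \<pi> (sc (\<epsilon> (u*x)) (f c)))"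
    by (rule sl_swap2)
  also have "\<dots> = (\<Sum>(u,v)\<leftarrow>\<Delta> 1. \<pi> v * \<pi> (\<Sum>(x,c)\<leftarrow>L. sc (\<epsilon> (u*x)) (f c)))"
    by (simp add: sl_mult_l2 pi_sl2)
  finally show ?thesis .
qed

lemma CC': "(\<Sum>(a,w)\<leftarrow>L. \<pi> (f a) * \<pi> (eps_s sc \<Delta> \<epsilon> w))
   = (\<Sum>(u,v)\<leftarrow>\<Delta> 1. \<pi> (\<Sum>(a,w)\<leftarrow>L. sc (\<epsilon> (w*v)) (f a)) * \<pi> u)"
proof -
  have e: "\<pi> (eps_s sc \<Delta> \<epsilon> w) = (\<Sum>(u,v)\<leftarrow>\<Delta> 1. scA (\<epsilon> (w*v)) (\<pi> u))" for w
    unfolding eps_s_def by (simp add: pi_sl2 pi_sc)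
  have "(\<Sum>(a,w)\<leftarrow>L. \<pi> (f a) * \<pi> (eps_s sc \<Delta> \<epsilon> w))
      = (\<Sum>(a,w)\<leftarrow>L. \<Sum>(u,v)\<leftarrow>\<Delta> 1. \<pi> (sc (\<epsilon> (w*v)) (f a)) * \<pi> u)"
    by (simp add: e sl_mult_l2 scAm1 scAm2 pi_sc)
  also have "\<dots> = (\<Sum>(u,v)\<leftarrow>\<Delta> 1. \<Sum>(a,w)\<leftarrow>L. \<pi> (sc (\<epsilon> (w*v)) (f a)) * \<pi> u)"
    by (rule sl_swap2)
  also have "\<dots> = (\<Sum>(u,v)\<leftarrow>\<Delta> 1. \<pi> (\<Sum>(a,w)\<leftarrow>L. sc (\<epsilon> (w*v)) (f a)) * \<pi> u)"
    by (simp add: sl_mult_r2 pi_sl2)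
  finally show ?thesis .
qed

lemma dir13:
  assumes C1: "\<And>h. (\<Sum>(a,b)\<leftarrow>\<Delta> h. \<pi> a * \<pi> (S b)) = \<pi> (eps_t sc \<Delta> \<epsilon> h)"
  shows "\<pi> h * \<pi> k = \<pi> (h*k)"
proof -
  have "\<pi> h * \<pi> k = (\<Sum>(x,c)\<leftarrow>\<Delta> h. \<Sum>(a,b)\<leftarrow>\<Delta> x. \<pi> a * \<pi> (S b) * \<pi> c) * \<pi> k"
    using PR6[of h] by simp
  also have "\<dots> = (\<Sum>(x,c)\<leftarrow>\<Delta> h. \<Sum>(a,b)\<leftarrow>\<Delta> x. \<pi> a * \<pi> (S b) * \<pi> c * \<pi> k)"
    by (simp add: sl_mult_r2)
  also have "\<dots> = (\<Sum>(a,w)\<leftarrow>\<Delta> h. \<Sum>(b,c)\<leftarrow>\<Delta> w. \<pi> a * \<pi> (S b) * \<pi> c * \<pi> k)"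
    by (rule coassoc[OF VA]) (simp_all add: lin_simps)
  also have "\<dots> = (\<Sum>(a,w)\<leftarrow>\<Delta> h. \<pi> a * (\<Sum>(b,c)\<leftarrow>\<Delta> w. \<pi> (S b) * \<pi> c * \<pi> k))"
    by (simp add: sl_mult_l2 mult.assoc)
  also have "\<dots> = (\<Sum>(a,w)\<leftarrow>\<Delta> h. \<pi> a * (\<Sum>(b,c)\<leftarrow>\<Delta> w. \<pi> (S b) * \<pi> (c * k)))"
    by (simp add: PR5)
  also have "\<dots> = (\<Sum>(a,w)\<leftarrow>\<Delta> h. \<Sum>(b,c)\<leftarrow>\<Delta> w. \<pi> a * \<pi> (S b) * \<pi> (c * k))"
    by (simp add: sl_mult_l2 mult.assoc)
  also have "\<dots> = (\<Sum>(x,c)\<leftarrow>\<Delta> h. \<Sum>(a,b)\<leftarrow>\<Delta> x. \<pi> a * \<pi> (S b) * \<pi> (c * k))"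
    by (rule coassoc[OF VA, symmetric]) (simp_all add: lin_simps)
  also have "\<dots> = (\<Sum>(x,c)\<leftarrow>\<Delta> h. \<pi> (eps_t sc \<Delta> \<epsilon> x) * \<pi> (c * k))"
    by (simp add: sl_mult_r2[symmetric] C1)
  also have "\<dots> = (\<Sum>(u,v)\<leftarrow>\<Delta> 1. \<pi> v * \<pi> (\<Sum>(x,c)\<leftarrow>\<Delta> h. sc (\<epsilon> (u*x)) (c * k)))"
    by (rule CC)
  also have "\<dots> = (\<Sum>(u,v)\<leftarrow>\<Delta> 1. \<pi> v * \<pi> (\<Sum>(x,c)\<leftarrow>\<Delta> (h*k). sc (\<epsilon> (u*x)) c))"
    by (simp add: Lu sl_mult_r2 scm1)
  also have "\<dots> = (\<Sum>(x,c)\<leftarrow>\<Delta> (h*k). \<pi> (eps_t sc \<Delta> \<epsilon> x) * \<pi> c)"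
    using CC[where L="\<Delta> (h*k)" and f="\<lambda>c. c"] by simp
  also have "\<dots> = (\<Sum>(x,c)\<leftarrow>\<Delta> (h*k). \<Sum>(a,b)\<leftarrow>\<Delta> x. \<pi> a * \<pi> (S b) * \<pi> c)"
    by (simp add: sl_mult_r2[symmetric] C1)
  also have "\<dots> = \<pi> (h*k)" using PR6[of "h*k"] by simp
  finally show ?thesis .
qed

lemma dir23:
  assumes C2: "\<And>h. (\<Sum>(a,b)\<leftarrow>\<Delta> h. \<pi> (S a) * \<pi> b) = \<pi> (eps_s sc \<Delta> \<epsilon> h)"
  shows "\<pi> h * \<pi> k = \<pi> (h*k)"
proof -
  have "\<pi> h * \<pi> k = \<pi> h * (\<Sum>(x,c)\<leftarrow>\<Delta> k. \<Sum>(a,b)\<leftarrow>\<Delta> x. \<pi> a * \<pi> (S b) * \<pi> c)"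
    using PR6[of k] by simp
  also have "\<dots> = (\<Sum>(x,c)\<leftarrow>\<Delta> k. (\<Sum>(a,b)\<leftarrow>\<Delta> x. \<pi> h * \<pi> a * \<pi> (S b)) * \<pi> c)"
    by (simp add: sl_mult_l2 sl_mult_r2 mult.assoc)
  also have "\<dots> = (\<Sum>(x,c)\<leftarrow>\<Delta> k. (\<Sum>(a,b)\<leftarrow>\<Delta> x. \<pi> (h * a) * \<pi> (S b)) * \<pi> c)"
    by (simp add: PR2)
  also have "\<dots> = (\<Sum>(x,c)\<leftarrow>\<Delta> k. \<Sum>(a,b)\<leftarrow>\<Delta> x. \<pi> (h * a) * \<pi> (S b) * \<pi> c)"
    by (simp add: sl_mult_r2)
  also have "\<dots> = (\<Sum>(a,w)\<leftarrow>\<Delta> k. \<Sum>(b,c)\<leftarrow>\<Delta> w. \<pi> (h * a) * \<pi> (S b) * \<pi> c)"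
    by (rule coassoc[OF VA]) (simp_all add: lin_simps)
  also have "\<dots> = (\<Sum>(a,w)\<leftarrow>\<Delta> k. \<pi> (h * a) * \<pi> (eps_s sc \<Delta> \<epsilon> w))"
    by (simp add: sl_mult_l2[symmetric] mult.assoc C2)
  also have "\<dots> = (\<Sum>(u,v)\<leftarrow>\<Delta> 1. \<pi> (\<Sum>(a,w)\<leftarrow>\<Delta> k. sc (\<epsilon> (w*v)) (h * a)) * \<pi> u)"
    by (rule CC')
  also have "\<dots> = (\<Sum>(u,v)\<leftarrow>\<Delta> 1. \<pi> (\<Sum>(a,w)\<leftarrow>\<Delta> (h*k). sc (\<epsilon> (w*v)) a) * \<pi> u)"
    by (simp add: Rv sl_mult_l2 scm2)
  also have "\<dots> = (\<Sum>(a,w)\<leftarrow>\<Delta> (h*k). \<pi> a * \<pi> (eps_s sc \<Delta> \<epsilon> w))"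
    using CC'[where L="\<Delta> (h*k)" and f="\<lambda>a. a"] by simp
  also have "\<dots> = (\<Sum>(a,w)\<leftarrow>\<Delta> (h*k). \<Sum>(b,c)\<leftarrow>\<Delta> w. \<pi> a * \<pi> (S b) * \<pi> c)"
    by (simp add: sl_mult_l2[symmetric] mult.assoc C2)
  also have "\<dots> = (\<Sum>(x,c)\<leftarrow>\<Delta> (h*k). \<Sum>(a,b)\<leftarrow>\<Delta> x. \<pi> a * \<pi> (S b) * \<pi> c)"
    by (rule coassoc[OF VA, symmetric]) (simp_all add: lin_simps)
  also have "\<dots> = \<pi> (h*k)" using PR6[of "h*k"] by simp
  finally show ?thesis .
qed

end

theorem proposition3p3:
  fixes sc :: "'k::field \<Rightarrow> 'h::ring_1 \<Rightarrow> 'h"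
    and \<Delta> :: "'h \<Rightarrow> ('h \<times> 'h) list" and \<epsilon> :: "'h \<Rightarrow> 'k" and S :: "'h \<Rightarrow> 'h"
    and scA :: "'k \<Rightarrow> 'a::ring_1 \<Rightarrow> 'a" and \<pi> :: "'h \<Rightarrow> 'a"
  assumes "weak_hopf_algebra sc \<Delta> \<epsilon> S"
    and "algebra_over scA"
    and "partial_rep sc \<Delta> S scA \<pi>"
  shows "((\<forall>h. (\<Sum>(a,b)\<leftarrow>\<Delta> h. \<pi> a * \<pi> (S b)) = \<pi> (\<Sum>(a,b)\<leftarrow>\<Delta> h. a * S b)
              \<and> \<pi> (\<Sum>(a,b)\<leftarrow>\<Delta> h. a * S b) = \<pi> (eps_t sc \<Delta> \<epsilon> h))
          \<longleftrightarrow> (\<forall>h. (\<Sum>(a,b)\<leftarrow>\<Delta> h. \<pi> (S a) * \<pi> b) = \<pi> (\<Sum>(a,b)\<leftarrow>\<Delta> h. S a * b)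
              \<and> \<pi> (\<Sum>(a,b)\<leftarrow>\<Delta> h. S a * b) = \<pi> (eps_s sc \<Delta> \<epsilon> h)))
       \<and> ((\<forall>h. (\<Sum>(a,b)\<leftarrow>\<Delta> h. \<pi> (S a) * \<pi> b) = \<pi> (\<Sum>(a,b)\<leftarrow>\<Delta> h. S a * b)
              \<and> \<pi> (\<Sum>(a,b)\<leftarrow>\<Delta> h. S a * b) = \<pi> (eps_s sc \<Delta> \<epsilon> h))
          \<longleftrightarrow> is_representation sc scA \<pi>)"
proof -
  interpret wpr sc \<Delta> \<epsilon> S scA \<pi> using assms by (rule wpr.intro)
  have rep: "is_representation sc scA \<pi> \<longleftrightarrow> (\<forall>h k. \<pi> (h * k) = \<pi> h * \<pi> k)"
  proof -
    have "lin_map sc scA \<pi>" using assms(3) unfolding partial_rep_def by (elim conjE)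
    then show ?thesis unfolding is_representation_def using pi_1 by (auto simp del: lin_simps)
  qed
  have piS: "\<pi> (\<Sum>(a,b)\<leftarrow>L. f a b) = (\<Sum>(a,b)\<leftarrow>L. \<pi> (f a b))" for L f by (rule pi_sl2)
  let ?C1 = "\<forall>h. (\<Sum>(a,b)\<leftarrow>\<Delta> h. \<pi> a * \<pi> (S b)) = \<pi> (\<Sum>(a,b)\<leftarrow>\<Delta> h. a * S b)
              \<and> \<pi> (\<Sum>(a,b)\<leftarrow>\<Delta> h. a * S b) = \<pi> (eps_t sc \<Delta> \<epsilon> h)"
  let ?C2 = "\<forall>h. (\<Sum>(a,b)\<leftarrow>\<Delta> h. \<pi> (S a) * \<pi> b) = \<pi> (\<Sum>(a,b)\<leftarrow>\<Delta> h. S a * b)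
              \<and> \<pi> (\<Sum>(a,b)\<leftarrow>\<Delta> h. S a * b) = \<pi> (eps_s sc \<Delta> \<epsilon> h)"
  have i13: "\<forall>h k. \<pi> (h * k) = \<pi> h * \<pi> k" if ?C1
  proof (intro allI)
    fix h k
    have "\<And>h. (\<Sum>(a,b)\<leftarrow>\<Delta> h. \<pi> a * \<pi> (S b)) = \<pi> (eps_t sc \<Delta> \<epsilon> h)"
      using that by (intro trans[OF conjunct1 conjunct2]) (erule spec)+
    from dir13[OF this] show "\<pi> (h * k) = \<pi> h * \<pi> k" by simp
  qed
  have i23: "\<forall>h k. \<pi> (h * k) = \<pi> h * \<pi> k" if ?C2
  proof (intro allI)
    fix h k
    have "\<And>h. (\<Sum>(a,b)\<leftarrow>\<Delta> h. \<pi> (S a) * \<pi> b) = \<pi> (eps_s sc \<Delta> \<epsilon> h)"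
      using that by (intro trans[OF conjunct1 conjunct2]) (erule spec)+
    from dir23[OF this] show "\<pi> (h * k) = \<pi> h * \<pi> k" by simp
  qed
  have i31: ?C1 if m: "\<forall>h k. \<pi> (h * k) = \<pi> h * \<pi> k"
  proof (intro allI conjI)
    fix h
    show "(\<Sum>(a,b)\<leftarrow>\<Delta> h. \<pi> a * \<pi> (S b)) = \<pi> (\<Sum>(a,b)\<leftarrow>\<Delta> h. a * S b)"
      by (simp add: piS m)
    show "\<pi> (\<Sum>(a,b)\<leftarrow>\<Delta> h. a * S b) = \<pi> (eps_t sc \<Delta> \<epsilon> h)" by (simp add: ant_t)
  qed
  have i32: ?C2 if m: "\<forall>h k. \<pi> (h * k) = \<pi> h * \<pi> k"
  proof (intro allI conjI)
    fix h
    show "(\<Sum>(a,b)\<leftarrow>\<Delta> h. \<pi> (S a) * \<pi> b) = \<pi> (\<Sum>(a,b)\<leftarrow>\<Delta> h. S a * b)"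
      by (simp add: piS m)
    show "\<pi> (\<Sum>(a,b)\<leftarrow>\<Delta> h. S a * b) = \<pi> (eps_s sc \<Delta> \<epsilon> h)" by (simp add: ant_s)
  qed
  show ?thesis using rep i13 i23 i31 i32 by blast
qed

end
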